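(* There is a constant $C>0$ such that for all sufficiently large $n$ and every $Q \in \mathcal{Q}_n$, $$\sup_{w \in G_a} |Q(w)| \ge \exp(-Cn^{1/5}\log^5 n).$$
   Context: Let $n$ be a positive integer, $a = n^{-2/5}$, $\alpha = e^{ia}$, $\beta = e^{-ia}$, and $G_a = \{z \in \mathbb{C} : \arg(\frac{\alpha-z}{z-\beta}) \in (\frac{a}{2},a)\}$ (principal argument), the open region bounded by the circular arcs $\{z:\arg(\frac{\alpha-z}{z-\beta})=a/2\}$ and $\{z:\arg(\frac{\alpha-z}{z-\beta})=a\}$. $\mathcal{P}_n$ is the set of polynomials $p(z) = 1-\sigma z^d+\sum_{j = n^{1/5}}^n c_j z^j \in \mathbb{C}[z]$ with $1 \le d < n^{1/5}$ an integer, $\sigma \in \{0,1\}$, $|c_j| \le 1$ (floor functions omitted); $\mathcal{Q}_n$ is the set of polynomials $(z-\alpha)(z-\beta)p(z)$ with $p \in \mathcal{P}_n$. $\log$ is the natural logarithm. *)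

theory Defs
  imports "HOL-Analysis.Analysis"
begin

definition Ga :: "real \<Rightarrow> complex set" where
  "Ga a = {z. Arg ((cis a - z) / (z - cis (- a))) \<in> {a / 2 <..< a}}"

definition in_P :: "nat \<Rightarrow> (complex \<Rightarrow> complex) \<Rightarrow> bool" where
  "in_P n p \<longleftrightarrow> (\<exists>\<sigma>::complex. \<exists>d::nat. \<exists>c::nat \<Rightarrow> complex.
      \<sigma> \<in> {0, 1} \<and> 1 \<le> d \<and> real d < real n powr (1/5) \<and>
      (\<forall>j. real n powr (1/5) \<le> real j \<and> j \<le> n \<longrightarrow> norm (c j) \<le> 1) \<and>
      p = (\<lambda>z. 1 - \<sigma> * z ^ d + (\<Sum>j\<in>{j. real n powr (1/5) \<le> real j \<and> j \<le> n}. c j * z ^ j)))"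

definition in_Q :: "nat \<Rightarrow> (complex \<Rightarrow> complex) \<Rightarrow> bool" where
  "in_Q n Q \<longleftrightarrow> (\<exists>p. in_P n p \<and>
      Q = (\<lambda>z. (z - cis (real n powr (-2/5))) * (z - cis (- (real n powr (-2/5)))) * p z))"

end

theory Submission
  imports Defs "HOL-Real_Asymp.Real_Asymp" "HOL-Complex_Analysis.Complex_Analysis"
begin



lemma cos_ge_half: fixes x :: real assumes "0 \<le> x" "x \<le> 1" shows "cos x \<ge> 1/2"
proof -
  have "cos (pi/3) \<le> cos x"
    using assms pi_gt3 by (intro cos_monotone_0_pi_le) auto
  thus ?thesis by (simp add: cos_60)
qed

lemma sin_ge_half: fixes x :: real assumes "0 \<le> x" "x \<le> 1" shows "sin x \<ge> x/2"
proof (cases "x = 0")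
  case True thus ?thesis by simp
next
  case False
  hence "0 < x" using assms by simp
  from MVT2[OF this, of sin cos] obtain z where z: "0 < z" "z < x" "sin x - sin 0 = (x - 0) * cos z"
    by (auto intro: DERIV_sin)
  have "cos z \<ge> 1/2" using z assms by (intro cos_ge_half) auto
  hence "x * cos z \<ge> x * (1/2)" using \<open>0<x\<close> by (intro mult_left_mono) auto
  thus ?thesis using z by simp
qed

lemma z0_formula:
  fixes a \<eta> :: real
  assumes "0 < a" "a < \<eta>" "\<eta> < 1"
  shows "cis a - cis \<eta> = complex_of_real (sin ((\<eta> - a)/2) / sin ((\<eta> + a)/2)) * (1 - cis (\<eta> + a))"
proof -
  define u where "u = (\<eta> + a)/2"
  define v where "v = (\<eta> - a)/2"
  have a: "a = u - v" and e: "\<eta> = u + v" unfolding u_def v_def by (auto simp: field_simps)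
  have su: "sin u \<noteq> 0" unfolding u_def using assms pi_gt3 by (intro sin_gt_zero[THEN less_imp_neq, THEN not_sym]) auto
  have "u + v + (u - v) = 2 * u" by simp
  show ?thesis unfolding a e
    apply (simp add: complex_eq_iff cis.sel u_def[symmetric] v_def[symmetric])
    using su
    apply (simp add: cos_add cos_diff sin_add sin_diff field_simps)
    apply (subst (1 2) mult.commute[of u 2])
    apply (simp add: cos_double_sin sin_double power2_eq_square)
    apply (simp add: algebra_simps)
    done
qed

definition Wf :: "real \<Rightarrow> complex \<Rightarrow> complex" where
  "Wf a \<zeta> = exp \<zeta> * cis (a - pi/2)"
lemma Wf_polar: "Wf a \<zeta> = complex_of_real (exp (Re \<zeta>)) * cis (Im \<zeta> + a - pi/2)"
proof -
  have "Wf a \<zeta> = complex_of_real (exp (Re \<zeta>)) * (cis (Im \<zeta>) * cis (a - pi/2))"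
    unfolding Wf_def exp_eq_polar[of \<zeta>] by (simp only: exp_of_real mult.assoc)
  also have "cis (Im \<zeta>) * cis (a - pi/2) = cis (Im \<zeta> + a - pi/2)"
    by (simp only: cis_mult add_diff_eq)
  finally show ?thesis .
qed

lemma Wf_ne_aux: fixes e \<phi> :: real assumes "-pi < \<phi>" "\<phi> < pi" "e > 0"
  shows "1 + complex_of_real e * cis \<phi> \<noteq> 0"
proof
  assume h: "1 + complex_of_real e * cis \<phi> = 0"
  have "Im (1 + complex_of_real e * cis \<phi>) = Im 0" using h by (rule arg_cong)
  hence i: "e * sin \<phi> = 0" by simp
  have "Re (1 + complex_of_real e * cis \<phi>) = Re 0" using h by (rule arg_cong)
  hence r: "1 + e * cos \<phi> = 0" by simp
  have "sin \<phi> = 0" using i assms by simp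
  hence "\<phi> = 0" using sin_eq_0_pi[of \<phi>] assms by blast
  hence "1 + e = 0" using r by simp
  thus False using assms by linarith
qed

lemma norm_Wf: "norm (Wf a \<zeta>) = exp (Re \<zeta>)"
  by (simp add: Wf_polar norm_mult)

lemma Wf_ne: assumes "-pi < Im \<zeta> + a - pi/2" "Im \<zeta> + a - pi/2 < pi"
  shows "1 + Wf a \<zeta> \<noteq> 0"
  unfolding Wf_polar using assms by (intro Wf_ne_aux) auto

definition zm :: "real \<Rightarrow> complex \<Rightarrow> complex" where
  "zm a \<zeta> = (cis a + cis (-a) * Wf a \<zeta>) / (1 + Wf a \<zeta>)"
lemma zm_minus_alpha: assumes "1 + W \<noteq> 0"
  shows "(cis a + cis (-a) * W) / (1 + W) - cis a = W * (cis (-a) - cis a) / (1 + W)"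
proof -
  have "cis a + cis (-a) * W - cis a * (1 + W) = W * (cis (-a) - cis a)" by (simp add: algebra_simps)
  thus ?thesis using assms by (simp add: divide_diff_eq_iff)
qed

lemma zm_minus_beta: assumes "1 + W \<noteq> 0"
  shows "(cis a + cis (-a) * W) / (1 + W) - cis (-a) = (cis a - cis (-a)) / (1 + W)"
proof -
  have "cis a + cis (-a) * W - cis (-a) * (1 + W) = cis a - cis (-a)" by (simp add: algebra_simps)
  thus ?thesis using assms by (simp add: divide_diff_eq_iff)
qed

lemma zm_ratio: assumes "1 + W \<noteq> 0" "cis a \<noteq> cis (-a)"
  shows "(cis a - (cis a + cis (-a) * W) / (1 + W)) / ((cis a + cis (-a) * W) / (1 + W) - cis (-a)) = W"
proof -
  have "cis a * (1 + W) - (cis a + cis (-a) * W) = W * (cis a - cis (-a))" by (simp add: algebra_simps)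
  hence "cis a - (cis a + cis (-a) * W) / (1 + W) = W * (cis a - cis (-a)) / (1 + W)"
    using assms by (simp add: diff_divide_eq_iff)
  moreover have "cis a - cis (-a) \<noteq> 0" using assms by simp
  ultimately show ?thesis using assms by (simp add: zm_minus_beta)
qed

lemma norm_cis_diff: "norm (cis a - cis b) \<le> 2"
  using norm_triangle_ineq4[of "cis a" "cis b"] by simp

lemma unit_circle_side: fixes r a :: real
  shows "norm (cis a - complex_of_real r) = norm (1 - complex_of_real r * cis a)"
proof -
  have "(norm (cis a - complex_of_real r))^2 = (norm (1 - complex_of_real r * cis a))^2"
  proof -
    show ?thesis unfolding cmod_power2
      apply (simp add: power2_eq_square algebra_simps)
      by (metis sin_cos_squared_add3 distrib_left mult.assoc mult.right_neutral)
  qed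
  thus ?thesis by (simp add: power2_eq_iff_nonneg)
qed

lemma core:
  fixes Q :: "complex \<Rightarrow> complex" and a \<eta> lam M1 M3 S :: real
  assumes a: "0 < a" "a < 1" and eta: "0 < \<eta>" "\<eta> < 1" and lam: "0 \<le> lam"
    and holQ: "Q holomorphic_on UNIV"
    and M1: "\<And>z. norm z \<le> 1 \<Longrightarrow> norm (Q z) \<le> M1"
    and M3a: "\<And>z. norm z \<le> 3 \<Longrightarrow> norm (Q z) \<le> M3 * norm (z - cis a)"
    and M3b: "\<And>z. norm z \<le> 3 \<Longrightarrow> norm (Q z) \<le> M3 * norm (z - cis (-a))"
    and SG: "\<And>z. z \<in> Ga a \<Longrightarrow> norm (Q z) \<le> S"
    and pos: "M1 > 0" "M3 > 0"
  shows "norm (Q (zm a (Complex 0 (\<eta> - pi/2)))) * exp (lam * (\<eta> - pi/2))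
          \<le> max (M1 * exp (- lam * pi/2)) (S * exp (lam * (pi/2 - a/4)))"
proof -
  have pi3: "pi > 3" by (rule pi_gt3)
  define \<theta> where "\<theta> = pi/2 - a/4"
  define Bd where "Bd = max (M1 * exp (- lam * pi/2)) (S * exp (lam * \<theta>))"
  define \<epsilon> where "\<epsilon> = min (1/2) (M1 * exp (-lam*pi) / (4*M3))"
  have \<epsilon>pos: "\<epsilon> > 0" using pos by (simp add: \<epsilon>_def)
  have \<epsilon>half: "\<epsilon> \<le> 1/2" by (simp add: \<epsilon>_def)
  have \<epsilon>M: "4 * M3 * \<epsilon> \<le> M1 * exp (-lam*pi)"
  proof -
    have "\<epsilon> \<le> M1 * exp (-lam*pi) / (4*M3)" by (simp add: \<epsilon>_def)
    thus ?thesis using pos by (simp add: field_simps)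
  qed
  define T where "T = - ln \<epsilon>"
  have expT1: "exp (-T) = \<epsilon>" using \<epsilon>pos by (simp add: T_def)
  have expT2: "exp T = 1/\<epsilon>" using \<epsilon>pos by (simp add: T_def exp_minus field_simps)
  have Tpos: "T > 0" using \<epsilon>pos \<epsilon>half unfolding T_def by simp
  define H where "H = (\<lambda>\<zeta>. Q (zm a \<zeta>) * exp (- \<i> * complex_of_real lam * \<zeta>))"
  have normH: "norm (H \<zeta>) = norm (Q (zm a \<zeta>)) * exp (lam * Im \<zeta>)" for \<zeta>
    by (simp add: H_def norm_mult)
  define U where "U = {\<zeta>. -pi < Im \<zeta> + a - pi/2 \<and> Im \<zeta> + a - pi/2 < pi}"
  have openU: "open U" unfolding U_def
    by (intro open_Collect_conj open_Collect_less continuous_intros)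
  have neU: "1 + Wf a \<zeta> \<noteq> 0" if "\<zeta> \<in> U" for \<zeta> using that Wf_ne by (auto simp: U_def)
  have holz: "(\<lambda>\<zeta>. zm a \<zeta>) holomorphic_on U"
    unfolding zm_def using neU unfolding Wf_def by (intro holomorphic_intros) auto
  have "((\<lambda>z. Q z) \<circ> (\<lambda>\<zeta>. zm a \<zeta>)) holomorphic_on U"
    using holomorphic_on_compose_gen[OF holz holQ] by simp
  hence holQz: "(\<lambda>\<zeta>. Q (zm a \<zeta>)) holomorphic_on U" by (simp add: o_def)
  have holH: "H holomorphic_on U" unfolding H_def by (intro holomorphic_intros holQz)
  define lo where "lo = Complex (-T) (-pi/2)"
  define hi where "hi = Complex T \<theta>"
  define B where "B = box lo hi"
  define \<zeta>0 where "\<zeta>0 = Complex 0 (\<eta> - pi/2)"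
  have cbU: "cbox lo hi \<subseteq> U" using a pi3 by (auto simp: in_cbox_complex_iff U_def \<theta>_def lo_def hi_def)
  have z0B: "\<zeta>0 \<in> B" using a eta pi3 Tpos by (auto simp: in_box_complex_iff B_def \<zeta>0_def \<theta>_def lo_def hi_def)
  hence Bne: "B \<noteq> {}" by auto
  have clB: "closure B = cbox lo hi" using Bne by (simp add: B_def)
  have intB: "interior B = B" unfolding B_def by (rule interior_open[OF open_box])
  have frB: "frontier B = cbox lo hi - box lo hi" using Bne by (simp add: B_def frontier_box)
  have BU: "B \<subseteq> U" using cbU box_subset_cbox unfolding B_def by blast
  have cab: "cis a \<noteq> cis (-a)"
  proof
    assume "cis a = cis (-a)"
    hence "Im (cis a) = Im (cis (-a))" by simp
    hence "sin a = 0" by simp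
    moreover have "sin a > 0" using a pi3 by (intro sin_gt_zero) auto
    ultimately show False by simp
  qed
  have fr: "norm (H \<zeta>) \<le> Bd" if "\<zeta> \<in> frontier B" for \<zeta>
  proof -
    define s where "s = Re \<zeta>"
    define t where "t = Im \<zeta>"
    have zc: "\<zeta> \<in> cbox lo hi" "\<zeta> \<notin> box lo hi" using that frB by auto
    have sb: "-T \<le> s" "s \<le> T" and tb: "-pi/2 \<le> t" "t \<le> \<theta>"
      using zc(1) by (auto simp: in_cbox_complex_iff s_def t_def lo_def hi_def)
    have cases: "s = -T \<or> s = T \<or> t = -pi/2 \<or> t = \<theta>"
      using zc sb tb by (auto simp: in_box_complex_iff in_cbox_complex_iff s_def t_def lo_def hi_def)
    define W where "W = Wf a \<zeta>"
    have ne: "1 + W \<noteq> 0" unfolding W_def using cbU zc(1) neU by auto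
    have nW: "norm W = exp s" by (simp add: W_def norm_Wf s_def)
    have zmW: "zm a \<zeta> = (cis a + cis (-a) * W) / (1 + W)" by (simp add: zm_def W_def)
    have tle: "t \<le> pi/2" using tb a unfolding \<theta>_def by linarith
    have "lam * t \<le> lam * (pi/2)" using tle lam by (rule mult_left_mono)
    hence expt: "exp (lam * t) \<le> exp (lam * (pi/2))" by simp
    have small: "norm (H \<zeta>) \<le> M1 * exp (- lam * pi/2)" if hq: "norm (Q (zm a \<zeta>)) \<le> 4 * M3 * \<epsilon>"
    proof -
      have "norm (H \<zeta>) \<le> 4 * M3 * \<epsilon> * exp (lam * (pi/2))"
        unfolding normH t_def[symmetric] using hq expt pos \<epsilon>pos by (intro mult_mono) auto
      also have "\<dots> \<le> M1 * exp (-lam*pi) * exp (lam * (pi/2))"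
        using \<epsilon>M by (intro mult_right_mono) auto
      also have "\<dots> = M1 * exp (- lam * pi/2)" by (simp add: mult.assoc flip: exp_add)
      finally show ?thesis .
    qed
    consider "s = -T" | "s = T" | "t = -pi/2" | "t = \<theta>" using cases by blast
    thus ?thesis
    proof cases
      case 1
      have nW': "norm W = \<epsilon>" using nW 1 expT1 by simp
      have d: "norm (1 + W) \<ge> 1/2" using norm_diff_ineq[of 1 W] nW' \<epsilon>half by simp
      have "norm (zm a \<zeta> - cis a) = norm W * norm (cis (-a) - cis a) / norm (1 + W)"
        unfolding zmW zm_minus_alpha[OF ne] by (simp add: norm_mult norm_divide)
      also have "\<dots> \<le> \<epsilon> * 2 / (1/2)"
        using d nW' norm_cis_diff[of "-a" a] \<epsilon>pos
        by (intro frac_le mult_mono) auto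
      finally have dz: "norm (zm a \<zeta> - cis a) \<le> 4 * \<epsilon>" by simp
      have "norm (zm a \<zeta>) \<le> norm (cis a) + norm (zm a \<zeta> - cis a)"
        by (metis norm_triangle_sub add.commute)
      hence "norm (zm a \<zeta>) \<le> 3" using dz \<epsilon>half by simp
      hence "norm (Q (zm a \<zeta>)) \<le> M3 * (4 * \<epsilon>)"
        using M3a dz pos by (meson mult_left_mono less_imp_le order_trans)
      hence "norm (H \<zeta>) \<le> M1 * exp (- lam * pi/2)" by (intro small) (simp add: mult.assoc)
      thus ?thesis unfolding Bd_def by simp
    next
      case 2
      have nW': "norm W = 1/\<epsilon>" using nW 2 expT2 by simp
      have "2 \<le> 1/\<epsilon>" using \<epsilon>pos \<epsilon>half by (simp add: le_divide_eq)
      hence W2: "norm W \<ge> 2" using nW' by simp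
      have d: "norm (1 + W) \<ge> norm W - 1" using norm_diff_ineq[of W 1] by (simp add: add.commute)
      hence d2: "norm (1 + W) \<ge> 1/(2*\<epsilon>)" using W2 nW' \<epsilon>pos by (simp add: field_simps)
      have "norm (zm a \<zeta> - cis (-a)) = norm (cis a - cis (-a)) / norm (1 + W)"
        unfolding zmW zm_minus_beta[OF ne] by (simp add: norm_divide)
      also have "\<dots> \<le> 2 / (1/(2*\<epsilon>))"
        using d2 norm_cis_diff[of a "-a"] \<epsilon>pos
        by (intro frac_le) auto
      finally have dz: "norm (zm a \<zeta> - cis (-a)) \<le> 4 * \<epsilon>" by simp
      have "norm (zm a \<zeta>) \<le> norm (cis (-a)) + norm (zm a \<zeta> - cis (-a))"
        by (metis norm_triangle_sub add.commute)
      hence "norm (zm a \<zeta>) \<le> 3" using dz \<epsilon>half by simp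
      hence "norm (Q (zm a \<zeta>)) \<le> M3 * (4 * \<epsilon>)"
        using M3b dz pos by (meson mult_left_mono less_imp_le order_trans)
      hence "norm (H \<zeta>) \<le> M1 * exp (- lam * pi/2)" by (intro small) (simp add: mult.assoc)
      thus ?thesis unfolding Bd_def by simp
    next
      case 3
      have "W = complex_of_real (exp s) * cis (a - pi)"
        unfolding W_def Wf_polar s_def[symmetric] t_def[symmetric] 3 by (simp add: algebra_simps)
      also have "cis (a - pi) = - cis a" by (simp add: cis_divide[symmetric])
      finally have Wc: "W = - (complex_of_real (exp s) * cis a)" by simp
      have num: "cis a + cis (-a) * W = cis a - complex_of_real (exp s)"
        unfolding Wc by (simp add: cis_mult)
      have den: "1 + W = 1 - complex_of_real (exp s) * cis a" unfolding Wc by simp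
      have "norm (zm a \<zeta>) = norm (cis a - complex_of_real (exp s)) / norm (1 - complex_of_real (exp s) * cis a)"
        unfolding zmW num den by (simp add: norm_divide)
      also have "\<dots> = 1" using ne unfolding den unit_circle_side by simp
      finally have "norm (Q (zm a \<zeta>)) \<le> M1" using M1 by simp
      hence "norm (H \<zeta>) \<le> M1 * exp (- lam * pi/2)"
        unfolding normH t_def[symmetric] 3 by (simp add: mult_right_mono)
      thus ?thesis unfolding Bd_def by simp
    next
      case 4
      have Wc: "W = complex_of_real (exp s) * cis (3*a/4)"
        unfolding W_def Wf_polar s_def[symmetric] t_def[symmetric] 4 \<theta>_def by (simp add: algebra_simps)
      have "Arg W = 3*a/4" unfolding Wc using a pi3 by (simp add: Arg_cis)
      moreover have "(cis a - zm a \<zeta>) / (zm a \<zeta> - cis (-a)) = W"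
        unfolding zmW by (rule zm_ratio[OF ne cab])
      ultimately have "zm a \<zeta> \<in> Ga a" using a by (simp add: Ga_def)
      hence "norm (Q (zm a \<zeta>)) \<le> S" by (rule SG)
      hence "norm (H \<zeta>) \<le> S * exp (lam * \<theta>)"
        unfolding normH t_def[symmetric] 4 by (simp add: mult_right_mono)
      thus ?thesis unfolding Bd_def by simp
    qed
  qed
  have "norm (H \<zeta>0) \<le> Bd"
  proof (rule maximum_modulus_frontier[where f = H and S = B])
    show "H holomorphic_on interior B" unfolding intB using holH BU by (rule holomorphic_on_subset)
    show "continuous_on (closure B) H" unfolding clB
      using holomorphic_on_imp_continuous_on[OF holH] cbU by (rule continuous_on_subset)
    show "bounded B" by (simp add: B_def)
    show "\<zeta>0 \<in> B" by (rule z0B)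
  qed (rule fr)
  thus ?thesis unfolding normH Bd_def \<theta>_def \<zeta>0_def by simp
qed


lemma z0_real:
  assumes "0 < a" "a < \<eta>" "\<eta> < 1"
  shows "zm a (Complex 0 (\<eta> - pi/2)) = complex_of_real (sin ((\<eta> - a)/2) / sin ((\<eta> + a)/2))"
proof -
  define W where "W = Wf a (Complex 0 (\<eta> - pi/2))"
  have "W = cis (\<eta> - pi/2 + a - pi/2)" unfolding W_def Wf_polar by simp
  also have "\<eta> - pi/2 + a - pi/2 = (\<eta> + a) - pi" by simp
  also have "cis ((\<eta> + a) - pi) = - cis (\<eta> + a)" by (simp add: cis_divide[symmetric])
  finally have Wc: "W = - cis (\<eta> + a)" .
  have ne: "1 + W \<noteq> 0" unfolding W_def using assms pi_gt3 by (intro Wf_ne) auto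
  have num: "cis a + cis (-a) * W = cis a - cis \<eta>" unfolding Wc by (simp add: cis_mult)
  have den: "1 + W = 1 - cis (\<eta> + a)" unfolding Wc by simp
  show ?thesis unfolding zm_def W_def[symmetric] num
    using ne unfolding den z0_formula[OF assms] by simp
qed



lemma rho_bounds:
  fixes L m a \<eta> :: real
  assumes L: "L \<ge> 1" and m: "m \<ge> 128 * L" and am: "a * m^2 = 1" and eta: "\<eta> = 1 / (64 * m * L)"
  shows "0 < a" "a < \<eta>" "\<eta> < 1" "a < 1"
    "0 < sin ((\<eta> - a)/2) / sin ((\<eta> + a)/2)"
    "1 - sin ((\<eta> - a)/2) / sin ((\<eta> + a)/2) \<ge> 4 * L / m"
proof -
  have m128: "m \<ge> 128" using L m by linarith
  have mpos: "m > 0" using m128 by linarith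
  have a_eq: "a = 1 / (m * m)" using am mpos by (simp add: power2_eq_square eq_divide_eq mult.commute)
  show apos: "0 < a" using a_eq mpos by simp
  have mL: "m * L \<ge> m" using L mpos by (metis mult_left_mono mult.right_neutral less_imp_le)
  have "64 * L < m" using L m by linarith
  hence "m * (64 * L) < m * m" using mpos by (rule mult_strict_left_mono)
  hence lt: "64 * m * L < m * m" using L mpos by (simp_all add: algebra_simps)
  have pp: "0 < (m * m) * (64 * m * L)" using mpos L by (intro mult_pos_pos) auto
  have "1 / (m * m) < 1 / (64 * m * L)" by (rule divide_strict_left_mono[OF lt]) (use pp in auto)
  thus aeta: "a < \<eta>" unfolding a_eq eta .
  have Lm: "0 < L * m" using L mpos by (intro mult_pos_pos) auto
  have g1: "64 * m * L > 1" using mL m128 by linarith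
  show eta1: "\<eta> < 1" unfolding eta using g1 Lm by (simp add: divide_less_eq)
  show "a < 1" using aeta eta1 by simp
  define u where "u = (\<eta> + a)/2"
  define v where "v = (\<eta> - a)/2"
  have v: "v = u - a" unfolding u_def v_def by simp
  have u01: "0 < u" "u \<le> 1" using apos aeta eta1 unfolding u_def by auto
  have vpos: "0 < v" using aeta unfolding v_def by simp
  have su: "sin u > 0" using u01 pi_gt3 by (intro sin_gt_zero) auto
  have sv: "sin v > 0" using vpos u01 v apos pi_gt3 by (intro sin_gt_zero) auto
  show "0 < sin ((\<eta> - a)/2) / sin ((\<eta> + a)/2)" using su sv unfolding u_def v_def by simp
  have cu: "cos u \<ge> 1/2" using u01 by (intro cos_ge_half) auto
  have sa: "sin a \<ge> a/2" using apos \<open>a < 1\<close> by (intro sin_ge_half) auto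
  have ca: "cos a \<le> 1" by simp
  have "sin v = sin u * cos a - cos u * sin a" unfolding v by (rule sin_diff)
  hence "sin u - sin v = sin u * (1 - cos a) + cos u * sin a" by (simp add: right_diff_distrib)
  moreover have "sin u * (1 - cos a) \<ge> 0" using su ca by simp
  moreover have "cos u * sin a \<ge> (1/2) * (a/2)" using cu sa apos by (intro mult_mono) auto
  ultimately have diff: "sin u - sin v \<ge> a/4" by simp
  have sule: "sin u \<le> u" using u01 by (intro sin_x_le_x) auto
  have "1 - sin v / sin u = (sin u - sin v) / sin u" using su by (simp add: diff_divide_distrib)
  also have "\<dots> \<ge> (a/4) / u" using diff su sule apos by (intro frac_le) auto
  finally have r1: "1 - sin v / sin u \<ge> (a/4) / u" .
  have eq: "(a/4)/u = a / (2 * (\<eta> + a))" unfolding u_def by simp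
  have r2: "1 - sin v / sin u \<ge> a / (2 * (\<eta> + a))" using r1 eq by linarith
  have key: "8 * L * (\<eta> + a) \<le> a * m"
  proof -
    have e1: "8 * L * \<eta> = 1/(8*m)" unfolding eta using L mpos by simp
    have e2: "8 * L * a = 8 * L / m / m" unfolding a_eq by simp
    have "8 * L / m \<le> 1/16" using m mpos by (simp add: divide_le_eq)
    hence e3: "8 * L / m / m \<le> (1/16) / m" using mpos by (intro divide_right_mono) auto
    have e4: "a * m = 1 / m" unfolding a_eq using mpos by simp
    have "8 * L * (\<eta> + a) = 1/(8*m) + 8 * L / m / m" using e1 e2 by (simp add: distrib_left)
    also have "\<dots> \<le> 1/(8*m) + (1/16) / m" using e3 by simp
    also have "\<dots> = (3/16) / m" by simp
    also have "\<dots> \<le> 1 / m" using mpos by (intro divide_right_mono) auto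
    finally show ?thesis using e4 by simp
  qed
  have pos2: "2 * (\<eta> + a) > 0" using apos aeta by simp
  have "4 * L / m * (2 * (\<eta> + a)) = (8 * L * (\<eta> + a)) / m" by simp
  also have "\<dots> \<le> (a * m) / m" using key mpos by (intro divide_right_mono) auto
  also have "\<dots> = a" using mpos by simp
  finally have "4 * L / m * (2 * (\<eta> + a)) \<le> a" .
  hence "4 * L / m \<le> a / (2 * (\<eta> + a))" using pos2 by (simp add: le_divide_eq)
  thus "1 - sin ((\<eta> - a)/2) / sin ((\<eta> + a)/2) \<ge> 4 * L / m"
    using r2 unfolding u_def v_def by simp
qed


lemma Ga_bounded:
  assumes "0 < a" "a < 1" "z \<in> Ga a"
  shows "norm z \<le> 2"
proof -
  define w where "w = (cis a - z) / (z - cis (-a))"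
  have arg: "a/2 < Arg w" "Arg w < a" using assms(3) by (auto simp: Ga_def w_def)
  have wne: "w \<noteq> 0" using arg assms by (cases "w = 0") (auto simp: Arg_zero)
  hence zb: "z - cis (-a) \<noteq> 0" unfolding w_def by auto
  have zeq: "z * (1 + w) = cis a + cis (-a) * w"
  proof -
    have "w * (z - cis (-a)) = cis a - z" unfolding w_def using zb by simp
    thus ?thesis by (simp add: algebra_simps)
  qed
  have "cos (Arg w) \<ge> 0" using arg assms pi_gt3 by (intro cos_ge_zero) auto
  hence Rew: "Re w \<ge> 0" using wne by (simp add: cos_Arg divide_nonneg_pos zero_le_divide_iff)
  have n1: "(norm (1 + w))^2 = 1 + 2 * Re w + (norm w)^2"
    unfolding cmod_power2 by (simp add: power2_eq_square algebra_simps)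
  have sq: "2 * norm w \<le> 1 + (norm w)^2" using zero_le_square[of "norm w - 1"]
    by (simp add: power2_eq_square algebra_simps)
  have e: "(1 + norm w)^2 = 1 + 2 * norm w + (norm w)^2" by (simp add: power2_eq_square algebra_simps)
  have "(1 + norm w)^2 \<le> 4 * (norm (1 + w))^2"
  proof -
    have "4 * (1 + 2 * Re w + (norm w)^2) = 4 + 8 * Re w + 4 * (norm w)^2" by simp
    thus ?thesis unfolding n1 using Rew sq e zero_le_power2[of "norm w"] by linarith
  qed
  hence "(1 + norm w)^2 \<le> (2 * norm (1 + w))^2" by (simp add: power_mult_distrib)
  hence h1: "1 + norm w \<le> 2 * norm (1 + w)" by (rule power2_le_imp_le) simp
  have "norm z * norm (1 + w) = norm (cis a + cis (-a) * w)" using zeq by (metis norm_mult)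
  also have "\<dots> \<le> 1 + norm w" using norm_triangle_ineq[of "cis a" "cis (-a) * w"] by (simp add: norm_mult)
  also have "\<dots> \<le> 2 * norm (1 + w)" by (rule h1)
  finally have "norm z * norm (1 + w) \<le> 2 * norm (1 + w)" .
  moreover have "norm (1 + w) > 0"
  proof -
    have "norm (1 + w) \<ge> 1/2" using h1 norm_ge_zero[of w] by linarith
    thus ?thesis by linarith
  qed
  ultimately show ?thesis by simp
qed





lemma p_bound:
  fixes \<sigma> :: complex and c :: "nat \<Rightarrow> complex" and J :: "nat set" and z :: complex and R :: real
  assumes s: "\<sigma> \<in> {0,1}" and dn: "d \<le> n" and J: "J \<subseteq> {..n}" and c: "\<forall>j\<in>J. norm (c j) \<le> 1"
    and R: "1 \<le> R" and z: "norm z \<le> R"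
  shows "norm (1 - \<sigma> * z^d + (\<Sum>j\<in>J. c j * z^j)) \<le> (real n + 3) * R^n"
proof -
  have fin: "finite J" using J finite_subset by blast
  have cJ: "card J \<le> n + 1" using card_mono[OF _ J] by simp
  have zp: "norm (z^k) \<le> R^n" if "k \<le> n" for k
  proof -
    have "norm (z^k) = norm z ^ k" by (simp add: norm_power)
    also have "\<dots> \<le> R^k" by (rule power_mono) (use z in auto)
    also have "\<dots> \<le> R^n" by (rule power_increasing) (use that R in auto)
    finally show ?thesis .
  qed
  have Rn: "1 \<le> R^n" using R by (rule one_le_power)
  have ns: "norm \<sigma> \<le> 1" using s by auto
  have t1: "norm (\<sigma> * z^d) \<le> R^n"
  proof -
    have "norm (\<sigma> * z^d) = norm \<sigma> * norm (z^d)" by (simp add: norm_mult)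
    also have "\<dots> \<le> 1 * R^n" using ns zp[OF dn] by (intro mult_mono) auto
    finally show ?thesis by simp
  qed
  have t2: "norm (\<Sum>j\<in>J. c j * z^j) \<le> (\<Sum>j\<in>J. R^n)"
  proof (rule sum_norm_le)
    fix j assume j: "j \<in> J"
    have "norm (c j * z^j) = norm (c j) * norm (z^j)" by (simp add: norm_mult)
    also have "\<dots> \<le> 1 * R^n" using c j zp[of j] J by (intro mult_mono) auto
    finally show "norm (c j * z^j) \<le> R^n" by simp
  qed
  have "(\<Sum>j\<in>J. R^n) = real (card J) * R^n" by simp
  also have "\<dots> \<le> (real n + 1) * R^n" using cJ Rn by (intro mult_right_mono) auto
  finally have t3: "norm (\<Sum>j\<in>J. c j * z^j) \<le> (real n + 1) * R^n" using t2 by linarith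
  have "norm (1 - \<sigma> * z^d + (\<Sum>j\<in>J. c j * z^j)) \<le> norm (1::complex) + norm (\<sigma> * z^d) + norm (\<Sum>j\<in>J. c j * z^j)"
    by (smt (verit) norm_triangle_ineq norm_triangle_ineq4)
  also have "\<dots> \<le> R^n + R^n + (real n + 1) * R^n" using t1 t3 Rn by simp
  also have "\<dots> = (real n + 3) * R^n" by (simp add: algebra_simps)
  finally show ?thesis .
qed



lemma q0_bound:
  fixes \<sigma> :: complex and c :: "nat \<Rightarrow> complex" and J :: "nat set" and \<rho> L m :: real and n d :: nat
  assumes s: "\<sigma> \<in> {0,1}" and d1: "1 \<le> d" and J: "J \<subseteq> {..n}" and c: "\<forall>j\<in>J. norm (c j) \<le> 1"
    and Jm: "\<forall>j\<in>J. m \<le> real j"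
    and n3: "3 \<le> n" and L: "L = ln (real n)" and L1: "1 \<le> L" and mn: "m \<le> real n" and m128: "128 * L \<le> m"
    and \<rho>0: "0 < \<rho>" and \<rho>1: "1 - \<rho> \<ge> 4 * L / m"
  shows "norm (1 - \<sigma> * (complex_of_real \<rho>)^d + (\<Sum>j\<in>J. c j * (complex_of_real \<rho>)^j)) \<ge> 1 / real n"
proof -
  have mpos: "m > 0" using L1 m128 by linarith
  have npos: "real n > 0" using n3 by simp
  have q4: "4 * L / m \<ge> 0" using L1 mpos by simp
  have \<rho>le: "\<rho> \<le> 1" using \<rho>1 q4 by linarith
  have en4: "exp (- (4 * L)) = 1 / real n ^ 4"
  proof -
    have "ln (real n ^ 4) = 4 * L" using npos L by (simp add: ln_realpow)
    hence "exp (- (4 * L)) = exp (- ln (real n ^ 4))" by simp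
    also have "\<dots> = 1 / real n ^ 4" using npos by (simp add: exp_minus inverse_eq_divide)
    finally show ?thesis .
  qed
  have rj: "\<rho> ^ j \<le> 1 / real n ^ 4" if j: "j \<in> J" for j
  proof -
    have "\<rho> ^ j = \<rho> powr (real j)" using \<rho>0 by (simp add: powr_realpow)
    also have "\<dots> \<le> \<rho> powr m" using Jm j \<rho>0 \<rho>le by (intro powr_mono') auto
    also have "\<dots> \<le> exp (- (4 * L / m)) powr m"
    proof (rule powr_mono2)
      show "0 \<le> m" using mpos by simp
      show "0 \<le> \<rho>" using \<rho>0 by simp
      show "\<rho> \<le> exp (- (4 * L / m))" using exp_minus_ge[of "4 * L / m"] \<rho>1 by linarith
    qed
    also have "\<dots> = exp (- (4 * L))" using mpos by (simp add: exp_powr_real)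
    finally show ?thesis using en4 by simp
  qed
  have fin: "finite J" using J finite_subset by blast
  have cJ: "card J \<le> n + 1" using card_mono[OF _ J] by simp
  define tail where "tail = (\<Sum>j\<in>J. c j * (complex_of_real \<rho>)^j)"
  have "norm tail \<le> (\<Sum>j\<in>J. 1 / real n ^ 4)" unfolding tail_def
  proof (rule sum_norm_le)
    fix j assume j: "j \<in> J"
    have "norm (c j * (complex_of_real \<rho>)^j) = norm (c j) * \<rho>^j" using \<rho>0 by (simp add: norm_mult norm_power)
    also have "\<dots> \<le> 1 * (1 / real n ^ 4)" using c j rj[OF j] \<rho>0 by (intro mult_mono) auto
    finally show "norm (c j * (complex_of_real \<rho>)^j) \<le> 1 / real n ^ 4" by simp
  qed
  also have "\<dots> = real (card J) / real n ^ 4" by simp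
  also have "\<dots> \<le> (2 * real n) / real n ^ 4" using cJ n3 by (intro divide_right_mono) auto
  also have "\<dots> = 2 / real n ^ 3" using npos by (simp add: power_eq_if)
  also have "\<dots> \<le> 2 / real n"
  proof -
    have "real n \<le> real n ^ 3" using n3 by (simp add: power_increasing[of 1 3 "real n", simplified])
    thus ?thesis using npos by (intro divide_left_mono) auto
  qed
  finally have tb: "norm tail \<le> 2 / real n" .
  define hd where "hd = 1 - \<sigma> * (complex_of_real \<rho>)^d"
  have hb: "norm hd \<ge> 4 * L / m"
  proof (cases "\<sigma> = 0")
    case True
    have "4 * L / m \<le> 1" using m128 mpos L1 by (simp add: divide_le_eq)
    thus ?thesis using True by (simp add: hd_def)
  next
    case False
    hence "\<sigma> = 1" using s by auto
    hence e: "hd = complex_of_real (1 - \<rho>^d)" by (simp add: hd_def)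
    have nh: "norm hd = \<bar>1 - \<rho>^d\<bar>" unfolding e by (rule norm_of_real)
    have "\<rho>^d \<le> \<rho>^1" using d1 \<rho>0 \<rho>le by (intro power_decreasing) auto
    moreover have "\<rho>^d \<le> 1" using \<rho>0 \<rho>le by (simp add: power_le_one)
    ultimately show ?thesis using \<rho>1 nh by simp
  qed
  have "4 * L / m \<ge> 4 / real n"
  proof -
    have "4 / real n \<le> 4 / m" using mn mpos by (intro divide_left_mono) auto
    also have "\<dots> \<le> 4 * L / m" using L1 mpos by (intro divide_right_mono) auto
    finally show ?thesis .
  qed
  hence "norm hd \<ge> 4 / real n" using hb by linarith
  moreover have "norm (hd + tail) \<ge> norm hd - norm tail" by (rule norm_diff_ineq)
  ultimately have "norm (hd + tail) \<ge> 4 / real n - 2 / real n" using tb by linarith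
  moreover have "4 / real n - 2 / real n \<ge> 1 / real n" using npos by (simp add: divide_simps)
  ultimately show ?thesis unfolding hd_def tail_def by simp
qed



lemma main_fixed:
  fixes n :: nat and Q :: "complex \<Rightarrow> complex"
  assumes n3: "3 \<le> n" and nb: "128 * ln (real n) \<le> real n powr (1/5)" and HQ: "in_Q n Q"
  shows "exp (- 3000 * real n powr (1/5) * (ln (real n))^5) \<le> (SUP w\<in>Ga (real n powr (-2/5)). norm (Q w))"
proof -
  define m where "m = real n powr (1/5)"
  define L where "L = ln (real n)"
  define a where "a = real n powr (-2/5)"
  define \<eta> where "\<eta> = 1 / (64 * m * L)"
  have npos: "real n > 0" using n3 by simp
  have n3r: "3 \<le> real n" using n3 by simp
  have L1: "1 \<le> L"
  proof -
    have "exp 1 \<le> real n" using exp_le n3r by linarith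
    hence "ln (exp 1) \<le> ln (real n)" using npos by (subst ln_le_cancel_iff) auto
    thus ?thesis by (simp add: L_def)
  qed
  have m128: "128 * L \<le> m" using nb by (simp add: m_def L_def)
  have am: "a * m^2 = 1"
  proof -
    have m2: "m^2 = real n powr (1/5 + 1/5)" unfolding m_def power2_eq_square by (rule powr_add[symmetric])
    have "a * m^2 = real n powr (-2/5) * real n powr (1/5 + 1/5)" unfolding a_def m2 by simp
    also have "\<dots> = real n powr (-2/5 + (1/5 + 1/5))" by (rule powr_add[symmetric])
    also have "\<dots> = 1" using npos by simp
    finally show ?thesis .
  qed
  have mn: "m \<le> real n"
  proof -
    have "real n powr (1/5) \<le> real n powr 1" using n3r by (intro powr_mono) auto
    thus ?thesis using npos by (simp add: m_def)
  qed
  note rb = rho_bounds[OF L1 m128 am \<eta>_def]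
  define \<rho> where "\<rho> = sin ((\<eta> - a)/2) / sin ((\<eta> + a)/2)"
  have \<rho>0: "0 < \<rho>" and \<rho>1: "1 - \<rho> \<ge> 4 * L / m" using rb by (simp_all add: \<rho>_def)
  obtain p where p: "in_P n p" and Qeq: "Q = (\<lambda>z. (z - cis a) * (z - cis (-a)) * p z)"
    using HQ unfolding in_Q_def a_def by auto
  obtain \<sigma> d c where s: "\<sigma> \<in> {0,1}" and d1: "1 \<le> d" and dm: "real d < m"
    and c: "\<forall>j. m \<le> real j \<and> j \<le> n \<longrightarrow> norm (c j) \<le> 1"
    and peq: "p = (\<lambda>z. 1 - \<sigma> * z^d + (\<Sum>j\<in>{j. m \<le> real j \<and> j \<le> n}. c j * z^j))"
    using p unfolding in_P_def m_def by blast
  define J where "J = {j. m \<le> real j \<and> j \<le> n}"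
  have J1: "J \<subseteq> {..n}" and J2: "\<forall>j\<in>J. norm (c j) \<le> 1" and J3: "\<forall>j\<in>J. m \<le> real j"
    using c by (auto simp: J_def)
  have "real d \<le> real n" using dm mn by linarith
  hence dn: "d \<le> n" by simp
  have peq': "p = (\<lambda>z. 1 - \<sigma> * z^d + (\<Sum>j\<in>J. c j * z^j))" using peq by (simp add: J_def)
  have pb: "norm (p z) \<le> (real n + 3) * R^n" if "1 \<le> R" "norm z \<le> R" for R z
    unfolding peq' using p_bound[OF s dn J1 J2 that] by simp
  have holQ: "Q holomorphic_on UNIV" unfolding Qeq peq' by (intro holomorphic_intros)
  define M1 where "M1 = 4 * (real n + 3)"
  define M3 where "M3 = 4 * ((real n + 3) * 3^n)"
  have nd: "norm (z - cis b) \<le> norm z + 1" for z b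
    using norm_triangle_ineq4[of z "cis b"] by simp
  have Qn: "norm (Q z) = norm (z - cis a) * norm (z - cis (-a)) * norm (p z)" for z
    by (simp add: Qeq norm_mult)
  have hM1: "norm (Q z) \<le> M1" if "norm z \<le> 1" for z
  proof -
    have "norm (Q z) \<le> 2 * 2 * ((real n + 3) * 1^n)" unfolding Qn
      using nd[of z a] nd[of z "-a"] that pb[of 1 z]
      by (intro mult_mono) auto
    thus ?thesis by (simp add: M1_def)
  qed
  have hM3a: "norm (Q z) \<le> M3 * norm (z - cis a)" if "norm z \<le> 3" for z
  proof -
    have "norm (Q z) = norm (z - cis a) * (norm (z - cis (-a)) * norm (p z))" unfolding Qn by simp
    also have "\<dots> \<le> norm (z - cis a) * (4 * ((real n + 3) * 3^n))"
      using nd[of z "-a"] that pb[of 3 z] by (intro mult_left_mono mult_mono) auto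
    finally show ?thesis by (simp add: M3_def mult.commute)
  qed
  have hM3b: "norm (Q z) \<le> M3 * norm (z - cis (-a))" if "norm z \<le> 3" for z
  proof -
    have "norm (Q z) = norm (z - cis (-a)) * (norm (z - cis a) * norm (p z))" unfolding Qn by simp
    also have "\<dots> \<le> norm (z - cis (-a)) * (4 * ((real n + 3) * 3^n))"
      using nd[of z a] that pb[of 3 z] by (intro mult_left_mono mult_mono) auto
    finally show ?thesis by (simp add: M3_def mult.commute)
  qed
  have hb: "norm (Q z) \<le> 3 * 3 * ((real n + 3) * 2^n)" if "z \<in> Ga a" for z
  proof -
    have z2: "norm z \<le> 2" using Ga_bounded[OF _ _ that] rb by auto
    show ?thesis unfolding Qn
      using nd[of z a] nd[of z "-a"] z2 pb[of 2 z] by (intro mult_mono) auto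
  qed
  define S where "S = (SUP w\<in>Ga a. norm (Q w))"
  have bdd: "bdd_above ((\<lambda>w. norm (Q w)) ` Ga a)" using hb by (intro bdd_aboveI2) 
  have hS: "norm (Q z) \<le> S" if "z \<in> Ga a" for z unfolding S_def using that bdd by (rule cSUP_upper)
  define lam where "lam = 640 * m * L^2"
  have mpos: "m > 0" using m128 L1 by linarith
  have lam0: "0 \<le> lam" using mpos L1 by (simp add: lam_def)
  have lam\<eta>: "lam * \<eta> = 10 * L" using mpos L1 by (simp add: lam_def \<eta>_def power2_eq_square)
  have M1pos: "M1 > 0" "M3 > 0" by (simp_all add: M1_def M3_def)
  have cr: "norm (Q (zm a (Complex 0 (\<eta> - pi/2)))) * exp (lam * (\<eta> - pi/2))
          \<le> max (M1 * exp (- lam * pi/2)) (S * exp (lam * (pi/2 - a/4)))"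
    using rb by (intro core[OF _ _ _ _ lam0 holQ hM1 hM3a hM3b hS M1pos]) auto
  have zr: "zm a (Complex 0 (\<eta> - pi/2)) = complex_of_real \<rho>" unfolding \<rho>_def using rb by (intro z0_real) auto
  define q0 where "q0 = norm (Q (complex_of_real \<rho>))"
  have pr: "norm (p (complex_of_real \<rho>)) \<ge> 1 / real n"
    unfolding peq' using q0_bound[OF s d1 J1 J2 J3 n3 L_def L1 mn m128 \<rho>0 \<rho>1] by simp
  have a1n: "a \<ge> 1 / real n"
  proof -
    have "real n powr (-1) \<le> real n powr (-2/5)" using n3r by (intro powr_mono) auto
    moreover have "real n powr (-1) = 1 / real n" using npos by (rule powr_neg_one)
    ultimately show ?thesis unfolding a_def by linarith
  qed
  have sinpos: "sin a > 0" using rb pi_gt3 by (intro sin_gt_zero) auto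
  have sa: "sin a \<ge> 1 / (2 * real n)"
  proof -
    have "sin a \<ge> a / 2" using rb by (intro sin_ge_half) auto
    moreover have "1 / (2 * real n) = (1 / real n) / 2" by simp
    ultimately show ?thesis using a1n by linarith
  qed
  have da: "norm (complex_of_real \<rho> - cis b) \<ge> 1 / (2 * real n)" if "b = a \<or> b = -a" for b
  proof -
    have "\<bar>Im (complex_of_real \<rho> - cis b)\<bar> = sin a" using that sinpos by (elim disjE) simp_all
    thus ?thesis using abs_Im_le_cmod[of "complex_of_real \<rho> - cis b"] sa by linarith
  qed
  have q0b: "q0 \<ge> 1 / (4 * real n ^ 3)"
  proof -
    have "1 / (2 * real n) * (1 / (2 * real n)) * (1 / real n) \<le> q0" unfolding q0_def Qn
      using da[of a] da[of "-a"] pr npos by (intro mult_mono) auto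
    thus ?thesis by (simp add: power3_eq_cube)
  qed
  have q0pos: "q0 > 0" using q0b npos by (smt (verit) divide_pos_pos zero_less_power mult_pos_pos)
  have e10: "exp (lam * \<eta>) = real n ^ 10"
  proof -
    have "ln (real n ^ 10) = 10 * L" using npos by (simp add: ln_realpow L_def)
    thus ?thesis using npos lam\<eta> by (metis exp_ln zero_less_power)
  qed
  have big: "q0 * exp (lam * \<eta>) > M1"
  proof -
    have "q0 * exp (lam * \<eta>) \<ge> 1 / (4 * real n ^ 3) * real n ^ 10" unfolding e10
      using q0b by (intro mult_right_mono) auto
    also have "1 / (4 * real n ^ 3) * real n ^ 10 = real n * real n ^ 6 / 4"
    proof -
      have e: "real n ^ 10 = real n ^ 3 * (real n * real n ^ 6)" by algebra
      show ?thesis unfolding e using npos by simp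
    qed
    also have "\<dots> \<ge> real n * 3^6 / 4"
      using n3r npos by (intro divide_right_mono mult_left_mono power_mono) auto
    finally have "q0 * exp (lam * \<eta>) \<ge> real n * 729 / 4" by simp
    moreover have "real n * 729 / 4 > M1" using n3r by (simp add: M1_def)
    ultimately show ?thesis by linarith
  qed
  have ee: "lam * (\<eta> - pi/2) = lam * \<eta> + (- lam * pi/2)" by (simp add: algebra_simps)
  have "q0 * exp (lam * (\<eta> - pi/2)) = q0 * exp (lam * \<eta>) * exp (- lam * pi/2)"
    unfolding ee exp_add by (simp only: mult.assoc)
  also have "\<dots> > M1 * exp (- lam * pi/2)" using big by (intro mult_strict_right_mono) auto
  finally have gt: "q0 * exp (lam * (\<eta> - pi/2)) > M1 * exp (- lam * pi/2)" .
  have le: "q0 * exp (lam * (\<eta> - pi/2)) \<le> S * exp (lam * (pi/2 - a/4))"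
    using cr gt unfolding zr q0_def[symmetric] by (simp add: max_def split: if_splits)
  have "q0 * exp (- 4 * lam) \<le> q0 * exp (lam * (\<eta> - pi/2) - lam * (pi/2 - a/4))"
  proof -
    have "lam * (\<eta> - pi/2) - lam * (pi/2 - a/4) = lam * (\<eta> + a/4 - pi)" by (simp add: algebra_simps)
    also have "\<dots> \<ge> lam * (- 4)" using lam0 rb pi_less_4 by (intro mult_left_mono) auto
    finally show ?thesis using q0pos by simp
  qed
  also have "\<dots> = q0 * exp (lam * (\<eta> - pi/2)) / exp (lam * (pi/2 - a/4))" by (simp add: exp_diff)
  also have "\<dots> \<le> S" using le by (simp add: divide_le_eq)
  finally have Sb: "q0 * exp (- 4 * lam) \<le> S" .
  have l4: "ln (4 * real n ^ 3) \<le> 6 * L"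
  proof -
    have "ln (4 * real n ^ 3) = ln 4 + 3 * L" using npos by (simp add: ln_mult ln_realpow L_def)
    moreover have "ln (4::real) \<le> 3" using ln_le_minus_one[of 4] by simp
    ultimately show ?thesis using L1 by linarith
  qed
  have "1 / (4 * real n ^ 3) = exp (- ln (4 * real n ^ 3))" using npos by (simp add: exp_minus inverse_eq_divide)
  also have "\<dots> \<ge> exp (- (6 * L))" using l4 by simp
  finally have q0e: "q0 \<ge> exp (- (6 * L))" using q0b by linarith
  have "exp (- 3000 * m * L^5) \<le> exp (- (6 * L)) * exp (- 4 * lam)"
  proof -
    have L5: "L \<le> L^5" "L^2 \<le> L^5" using L1 by (simp_all add: power_increasing[of 1 5 L, simplified] power_increasing)
    have m1: "m \<ge> 1" using m128 L1 by linarith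
    have "L \<le> m * L^5" using L5 m1 L1 by (smt (verit) mult_le_cancel_right1 zero_le_power)
    moreover have "m * L^2 \<le> m * L^5" using L5 mpos by simp
    moreover have "4 * lam = 2560 * (m * L^2)" "3000 * m * L^5 = 3000 * (m * L^5)" by (simp_all add: lam_def)
    ultimately have "6 * L + 4 * lam \<le> 3000 * m * L^5" using L1 by linarith
    thus ?thesis by (simp flip: exp_add)
  qed
  also have "\<dots> \<le> q0 * exp (- 4 * lam)" using q0e by (intro mult_right_mono) auto
  also have "\<dots> \<le> S" by (rule Sb)
  finally show ?thesis unfolding S_def m_def L_def a_def by simp
qed

theorem proposition11:
  shows "\<exists>C::real. C > 0 \<and>
    (\<forall>\<^sub>F n in sequentially. \<forall>Q. in_Q n Q \<longrightarrow>
       (SUP w\<in>Ga (real n powr (-2/5)). norm (Q w))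
         \<ge> exp (- C * real n powr (1/5) * (ln (real n)) ^ 5))"
proof -
  have ev: "\<forall>\<^sub>F n in sequentially. 3 \<le> n \<and> 128 * ln (real n) \<le> real n powr (1/5)"
  proof -
    have "\<forall>\<^sub>F n in sequentially. 128 * ln (real n) \<le> real n powr (1/5)" by real_asymp
    moreover have "\<forall>\<^sub>F n in sequentially. (3::nat) \<le> n" by (rule eventually_ge_at_top)
    ultimately show ?thesis by eventually_elim auto
  qed
  show ?thesis
  proof (intro exI[of _ "3000::real"] conjI)
    show "(3000::real) > 0" by simp
    show "\<forall>\<^sub>F n in sequentially. \<forall>Q. in_Q n Q \<longrightarrow>
       (SUP w\<in>Ga (real n powr (-2/5)). norm (Q w))
         \<ge> exp (- 3000 * real n powr (1/5) * (ln (real n)) ^ 5)"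
      using ev
    proof eventually_elim
      case (elim n)
      show ?case
      proof (intro allI impI)
        fix Q assume hq: "in_Q n Q"
        have "exp (- 3000 * real n powr (1/5) * (ln (real n)) ^ 5)
            \<le> (SUP w\<in>Ga (real n powr (-2/5)). norm (Q w))"
          using elim hq by (intro main_fixed) auto
        thus "(SUP w\<in>Ga (real n powr (-2/5)). norm (Q w))
            \<ge> exp (- 3000 * real n powr (1/5) * (ln (real n)) ^ 5)" by simp
      qed
    qed
  qed
qed

end
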